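(* Let $\mathbb{F}$ be a field and $\mathcal{H}_o=(Q_0,Q_1,\mathbb{B}^{\mathrm{oh}})$ an oriented hypergraph such that, in $F(\mathcal{H}_o)$, all hyperedges share a common nonempty source-side vertex set $S$ and the target-side vertex sets $H_1,\dots,H_r$ ($r=|Q_1|$) of the hyperedges are pairwise distinct. Then the macrograph of $F(\mathcal{H}_o)$ is a star, and $\delta(F(\mathcal{H}_o))>0$ if and only if the indicator vectors $\mathbf{1}_{H_1},\dots,\mathbf{1}_{H_r}\in\mathbb{F}^{Q_0}$ are affinely dependent over $\mathbb{F}$. In particular $\delta(F(\mathcal{H}_o))>0$ implies $r\ge4$.
   Context: An oriented hypergraph is $\mathcal{H}_o=(Q_0,Q_1,\mathbb{B}^{\mathrm{oh}})$ with finite sets $Q_0,Q_1$ and $\mathbb{B}^{\mathrm{oh}}\in\{-1,0,+1\}^{Q_0\times Q_1}$. For a hyperedge $e$, its source-side vertex set is $\{v:\mathbb{B}^{\mathrm{oh}}_{v,e}=-1\}$ and its target-side vertex set is $\{v:\mathbb{B}^{\mathrm{oh}}_{v,e}=+1\}$. $F(\mathcal{H}_o)=(Q_0,Q_1,\beta_F)$ has $\beta_F(\mathbf{1}_e)=(A_e,B_e)$ with $A_e$ the indicator vector (in $\mathbb{F}^{Q_0}=T^1(\mathbb{F}^{Q_0})$) of the source-side set and $B_e$ that of the target-side set. For this data: $\partial_\beta:\mathbf{1}_e\mapsto B_e-A_e$; $V_{\mathrm{macro}}=\{A_e\}\cup\{B_e\}$ (a set); the macrograph is the directed multigraph on $V_{\mathrm{macro}}$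 with edge set $Q_1$ and $e:A_e\to B_e$; $B_{\mathrm{macro}}:\mathbb{F}^{Q_1}\to\mathbb{F}^{V_{\mathrm{macro}}}$, $\mathbf{1}_e\mapsto\mathbf{1}_{B_e}-\mathbf{1}_{A_e}$; $\hat\phi:\mathbb{F}^{V_{\mathrm{macro}}}\to T(\mathbb{F}^{Q_0})$, $\mathbf{1}_w\mapsto w$; $\delta(F(\mathcal{H}_o))=\dim(\mathrm{Im}B_{\mathrm{macro}}\cap\mathrm{Ker}\hat\phi)$. A star is a directed multigraph with one centre vertex and all edges joining the centre to distinct leaves. *)

theory Defs
  imports Complex_Main "HOL-Library.Function_Algebras"
begin

text \<open>An oriented hypergraph is given by finite sets Q0 (vertices), Q1 (hyperedges)
  and an incidence matrix Boh : Q0 x Q1 -> {-1,0,+1}, represented as a function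
  'v => 'e => int (only its values on Q0 x Q1 matter).\<close>

definition oh_incidence :: "'v set \<Rightarrow> 'e set \<Rightarrow> ('v \<Rightarrow> 'e \<Rightarrow> int) \<Rightarrow> bool" where
  "oh_incidence Q0 Q1 Boh \<longleftrightarrow> (\<forall>v\<in>Q0. \<forall>e\<in>Q1. Boh v e \<in> {-1, 0, 1})"

definition oh_src :: "'v set \<Rightarrow> ('v \<Rightarrow> 'e \<Rightarrow> int) \<Rightarrow> 'e \<Rightarrow> 'v set" where
  "oh_src Q0 Boh e = {v\<in>Q0. Boh v e = -1}"

definition oh_tgt :: "'v set \<Rightarrow> ('v \<Rightarrow> 'e \<Rightarrow> int) \<Rightarrow> 'e \<Rightarrow> 'v set" where
  "oh_tgt Q0 Boh e = {v\<in>Q0. Boh v e = 1}"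

definition ind_vec :: "'v set \<Rightarrow> 'v \<Rightarrow> 'a::field" where
  "ind_vec H = (\<lambda>v. if v \<in> H then 1 else 0)"

definition F_A :: "'v set \<Rightarrow> ('v \<Rightarrow> 'e \<Rightarrow> int) \<Rightarrow> 'e \<Rightarrow> ('v \<Rightarrow> 'a::field)" where
  "F_A Q0 Boh e = ind_vec (oh_src Q0 Boh e)"

definition F_B :: "'v set \<Rightarrow> ('v \<Rightarrow> 'e \<Rightarrow> int) \<Rightarrow> 'e \<Rightarrow> ('v \<Rightarrow> 'a::field)" where
  "F_B Q0 Boh e = ind_vec (oh_tgt Q0 Boh e)"

definition V_macro :: "'v set \<Rightarrow> 'e set \<Rightarrow> ('v \<Rightarrow> 'e \<Rightarrow> int) \<Rightarrow> ('v \<Rightarrow> 'a::field) set" where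
  "V_macro Q0 Q1 Boh = F_A Q0 Boh ` Q1 \<union> F_B Q0 Boh ` Q1"

definition is_star :: "'w set \<Rightarrow> 'e set \<Rightarrow> ('e \<Rightarrow> 'w) \<Rightarrow> ('e \<Rightarrow> 'w) \<Rightarrow> bool" where
  "is_star V E tail head \<longleftrightarrow>
     (\<forall>e\<in>E. tail e \<in> V \<and> head e \<in> V) \<and>
     (\<exists>c\<in>V. \<exists>leaf. (\<forall>e\<in>E. (tail e = c \<and> head e = leaf e \<or> head e = c \<and> tail e = leaf e) \<and> leaf e \<noteq> c)
               \<and> inj_on leaf E \<and> V = insert c (leaf ` E))"

text \<open>Vectors in F^{V_macro} are functions on V_macro (zero outside).\<close>

definition B_macro :: "'v set \<Rightarrow> 'e set \<Rightarrow> ('v \<Rightarrow> 'e \<Rightarrow> int) \<Rightarrow> ('e \<Rightarrow> 'a::field) \<Rightarrow> (('v \<Rightarrow> 'a) \<Rightarrow> 'a)" where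
  "B_macro Q0 Q1 Boh x = (\<lambda>w. \<Sum>e\<in>Q1. x e *
      ((if w = F_B Q0 Boh e then 1 else 0) - (if w = F_A Q0 Boh e then 1 else 0)))"

text \<open>phi_hat : F^{V_macro} -> T(F^{Q0}), 1_w |-> w. All w lie in T^1(F^{Q0}) = F^{Q0},
  which embeds injectively into T(F^{Q0}); so we record phi_hat with values in F^{Q0}.\<close>
definition phi_hat :: "'v set \<Rightarrow> 'e set \<Rightarrow> ('v \<Rightarrow> 'e \<Rightarrow> int) \<Rightarrow> (('v \<Rightarrow> 'a::field) \<Rightarrow> 'a) \<Rightarrow> ('v \<Rightarrow> 'a)" where
  "phi_hat Q0 Q1 Boh y = (\<lambda>v. \<Sum>w\<in>V_macro Q0 Q1 Boh. y w * w v)"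

definition im_B_macro :: "'v set \<Rightarrow> 'e set \<Rightarrow> ('v \<Rightarrow> 'e \<Rightarrow> int) \<Rightarrow> (('v \<Rightarrow> 'a::field) \<Rightarrow> 'a) set" where
  "im_B_macro Q0 Q1 Boh = {B_macro Q0 Q1 Boh x | x. \<forall>e. e \<notin> Q1 \<longrightarrow> x e = 0}"

definition ker_phi_hat :: "'v set \<Rightarrow> 'e set \<Rightarrow> ('v \<Rightarrow> 'e \<Rightarrow> int) \<Rightarrow> (('v \<Rightarrow> 'a::field) \<Rightarrow> 'a) set" where
  "ker_phi_hat Q0 Q1 Boh = {y. (\<forall>w. w \<notin> V_macro Q0 Q1 Boh \<longrightarrow> y w = 0) \<and> phi_hat Q0 Q1 Boh y = (\<lambda>_. 0)}"

definition delta_F :: "'v set \<Rightarrow> 'e set \<Rightarrow> ('v \<Rightarrow> 'e \<Rightarrow> int) \<Rightarrow> 'a::field itself \<Rightarrow> nat" where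
  "delta_F Q0 Q1 Boh _ = vector_space.dim (\<lambda>(c::'a) (f :: ('v \<Rightarrow> 'a) \<Rightarrow> 'a). \<lambda>w. c * f w)
      (im_B_macro Q0 Q1 Boh \<inter> ker_phi_hat Q0 Q1 Boh)"

definition affinely_dependent_family :: "'i set \<Rightarrow> ('i \<Rightarrow> 'v \<Rightarrow> 'a::field) \<Rightarrow> bool" where
  "affinely_dependent_family I u \<longleftrightarrow>
     (\<exists>c. (\<exists>i\<in>I. c i \<noteq> 0) \<and> (\<Sum>i\<in>I. c i) = 0 \<and> (\<forall>v. (\<Sum>i\<in>I. c i * u i v) = 0))"

end

theory Submission
  imports Defs
begin

lemma sum_fun_apply': "(sum f A) u = sum (\<lambda>w. f w u) A"
  by (induction A rule: infinite_finite_induct) auto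

lemma ind_vec_inj:
  assumes "(ind_vec X :: 'v \<Rightarrow> 'a::field) = ind_vec Y" shows "X = Y"
proof -
  have "\<And>v. (v \<in> X) = (v \<in> Y)"
  proof -
    fix v
    have "(ind_vec X v :: 'a) = ind_vec Y v" using assms by simp
    then show "(v \<in> X) = (v \<in> Y)" by (auto simp: ind_vec_def split: if_splits)
  qed
  then show ?thesis by auto
qed

lemma finite_V: "finite Q1 \<Longrightarrow> finite (V_macro Q0 Q1 Boh)"
  by (simp add: V_macro_def)

lemma phi_B:
  assumes "finite Q1"
  shows "phi_hat Q0 Q1 Boh (B_macro Q0 Q1 Boh x :: ('v \<Rightarrow> 'a::field) \<Rightarrow> 'a) v
     = (\<Sum>e\<in>Q1. x e * (F_B Q0 Boh e v - F_A Q0 Boh e v))"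
proof -
  let ?V = "V_macro Q0 Q1 Boh :: ('v \<Rightarrow> 'a) set"
  have fV: "finite ?V" using assms by (rule finite_V)
  have inner: "(\<Sum>w\<in>?V. ((if w = F_B Q0 Boh e then 1 else 0) - (if w = F_A Q0 Boh e then 1 else 0)) * w v)
      = F_B Q0 Boh e v - F_A Q0 Boh e v" if "e \<in> Q1" for e
  proof -
    have A: "F_A Q0 Boh e \<in> ?V" "F_B Q0 Boh e \<in> ?V" using that by (auto simp: V_macro_def)
    have "(\<Sum>w\<in>?V. ((if w = F_B Q0 Boh e then 1 else 0) - (if w = F_A Q0 Boh e then 1 else 0)) * w v)
       = (\<Sum>w\<in>?V. (if w = F_B Q0 Boh e then w v else 0)) - (\<Sum>w\<in>?V. (if w = F_A Q0 Boh e then w v else 0))"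
      unfolding sum_subtractf[symmetric] by (rule sum.cong) auto
    also have "\<dots> = F_B Q0 Boh e v - F_A Q0 Boh e v"
      using fV A by (simp add: sum.delta')
    finally show ?thesis .
  qed
  have "phi_hat Q0 Q1 Boh (B_macro Q0 Q1 Boh x :: ('v \<Rightarrow> 'a::field) \<Rightarrow> 'a) v
     = (\<Sum>w\<in>?V. \<Sum>e\<in>Q1. x e * (((if w = F_B Q0 Boh e then 1 else 0) - (if w = F_A Q0 Boh e then 1 else 0)) * w v))"
    by (simp add: phi_hat_def B_macro_def sum_distrib_right mult.assoc)
  also have "\<dots> = (\<Sum>e\<in>Q1. x e * (\<Sum>w\<in>?V. ((if w = F_B Q0 Boh e then 1 else 0) - (if w = F_A Q0 Boh e then 1 else 0)) * w v))"
    by (subst sum.swap) (simp add: sum_distrib_left)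
  also have "\<dots> = (\<Sum>e\<in>Q1. x e * (F_B Q0 Boh e v - F_A Q0 Boh e v))"
    by (rule sum.cong) (simp_all add: inner)
  finally show ?thesis .
qed

lemma B_outside:
  assumes "w \<notin> V_macro Q0 Q1 Boh"
  shows "B_macro Q0 Q1 Boh x w = 0"
  using assms unfolding B_macro_def V_macro_def
  by (intro sum.neutral) auto

lemma three_case:
  fixes ce cf cg :: "'a::field"
  assumes "ce \<noteq> 0 \<or> cf \<noteq> 0 \<or> cg \<noteq> 0" "ce + cf + cg = 0"
    and "\<forall>v. ce * ind_vec He v + cf * ind_vec Hf v + cg * ind_vec Hg v = 0"
    and "He \<noteq> Hf" "He \<noteq> Hg" "Hf \<noteq> Hg"
  shows False
proof -
  have pair: "c1 = 0 \<or> c2 = 0"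
    if d: "H1 \<noteq> H2" and s: "c1 + c2 + c3 = (0::'a)"
      and p: "\<forall>v. c1 * ind_vec H1 v + c2 * ind_vec H2 v + c3 * ind_vec H3 v = 0"
    for c1 c2 c3 H1 H2 H3
  proof -
    obtain v where "(v \<in> H1) \<noteq> (v \<in> H2)" using d by blast
    moreover have "c1 * ind_vec H1 v + c2 * ind_vec H2 v + c3 * ind_vec H3 v = 0" using p by blast
    ultimately show ?thesis using s
      by (cases "v \<in> H3") (auto simp: ind_vec_def split: if_splits simp: algebra_simps,
          (metis add.commute add_cancel_right_left add.left_commute)+)
  qed
  have 1: "ce = 0 \<or> cf = 0" using pair[of He Hf ce cf cg Hg] assms by blast
  have 2: "ce = 0 \<or> cg = 0" using pair[of He Hg ce cg cf Hf] assms by (simp add: algebra_simps)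
  have 3: "cf = 0 \<or> cg = 0" using pair[of Hf Hg cf cg ce He] assms by (simp add: algebra_simps)
  show False using 1 2 3 assms(1,2) by auto
qed

theorem proposition7p9:
  fixes Q0 :: "'v set" and Q1 :: "'e set" and Boh :: "'v \<Rightarrow> 'e \<Rightarrow> int"
    and S :: "'v set"
  assumes "finite Q0" and "finite Q1"
    and "oh_incidence Q0 Q1 Boh"
    and "Q1 \<noteq> {}"
    and "S \<noteq> {}"
    and "\<forall>e\<in>Q1. oh_src Q0 Boh e = S"
    and "inj_on (oh_tgt Q0 Boh) Q1"
  shows "is_star (V_macro Q0 Q1 Boh :: ('v \<Rightarrow> 'a::field) set) Q1 (F_A Q0 Boh) (F_B Q0 Boh)
    \<and> (delta_F Q0 Q1 Boh TYPE('a) > 0 \<longleftrightarrow>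
         affinely_dependent_family Q1 (\<lambda>e. (ind_vec (oh_tgt Q0 Boh e) :: 'v \<Rightarrow> 'a)))
    \<and> (delta_F Q0 Q1 Boh TYPE('a) > 0 \<longrightarrow> card Q1 \<ge> 4)"
proof -
  define H where "H = oh_tgt Q0 Boh"
  define a where "a = (ind_vec S :: 'v \<Rightarrow> 'a)"
  define b where "b = (\<lambda>e. ind_vec (H e) :: 'v \<Rightarrow> 'a)"
  let ?V = "V_macro Q0 Q1 Boh :: ('v \<Rightarrow> 'a) set"
  have FA: "F_A Q0 Boh e = a" if "e \<in> Q1" for e
    using assms(6) that by (simp add: F_A_def a_def)
  have FB: "F_B Q0 Boh e = b e" for e by (simp add: F_B_def b_def H_def)
  obtain s where sS: "s \<in> S" using assms(5) by blast
  have as: "a s = 1" using sS by (simp add: a_def ind_vec_def)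
  have bs: "b e s = 0" if "e \<in> Q1" for e
  proof -
    have "s \<in> oh_src Q0 Boh e" using assms(6) that sS by simp
    then have "s \<notin> H e" by (auto simp: oh_src_def oh_tgt_def H_def)
    then show ?thesis by (simp add: b_def ind_vec_def)
  qed
  have bna: "b e \<noteq> a" if "e \<in> Q1" for e using bs[OF that] as by auto
  have binj: "inj_on b Q1"
    using assms(7) unfolding inj_on_def b_def H_def by (metis ind_vec_inj)
  have Veq: "?V = insert a (b ` Q1)"
    using assms(4) FA FB by (auto simp: V_macro_def)
  have star: "is_star ?V Q1 (F_A Q0 Boh) (F_B Q0 Boh)"
    unfolding is_star_def
  proof (rule conjI)
    show "\<forall>e\<in>Q1. F_A Q0 Boh e \<in> ?V \<and> F_B Q0 Boh e \<in> ?V" by (auto simp: V_macro_def)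
    have "a \<in> ?V" using Veq by auto
    moreover have "(\<forall>e\<in>Q1. (F_A Q0 Boh e = a \<and> F_B Q0 Boh e = b e \<or> F_B Q0 Boh e = a \<and> F_A Q0 Boh e = b e) \<and> b e \<noteq> a)
        \<and> inj_on b Q1 \<and> ?V = insert a (b ` Q1)"
      using FA FB bna binj Veq by auto
    ultimately show "\<exists>c\<in>?V. \<exists>leaf. (\<forall>e\<in>Q1. (F_A Q0 Boh e = c \<and> F_B Q0 Boh e = leaf e \<or> F_B Q0 Boh e = c \<and> F_A Q0 Boh e = leaf e) \<and> leaf e \<noteq> c)
        \<and> inj_on leaf Q1 \<and> ?V = insert c (leaf ` Q1)" by blast
  qed
  have phiB: "phi_hat Q0 Q1 Boh (B_macro Q0 Q1 Boh x :: ('v \<Rightarrow> 'a) \<Rightarrow> 'a) v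
      = (\<Sum>e\<in>Q1. x e * b e v) - (\<Sum>e\<in>Q1. x e) * a v" for x v
  proof -
    have "phi_hat Q0 Q1 Boh (B_macro Q0 Q1 Boh x :: ('v \<Rightarrow> 'a) \<Rightarrow> 'a) v
      = (\<Sum>e\<in>Q1. x e * (b e v - a v))"
      using phi_B[OF assms(2), of Q0 Boh x v] FA FB by (simp cong: sum.cong)
    also have "\<dots> = (\<Sum>e\<in>Q1. x e * b e v) - (\<Sum>e\<in>Q1. x e) * a v"
      by (simp add: right_diff_distrib sum_subtractf sum_distrib_right)
    finally show ?thesis .
  qed
  have kerB: "(B_macro Q0 Q1 Boh x :: ('v \<Rightarrow> 'a) \<Rightarrow> 'a) \<in> ker_phi_hat Q0 Q1 Boh \<longleftrightarrow>
      (\<Sum>e\<in>Q1. x e) = 0 \<and> (\<forall>v. (\<Sum>e\<in>Q1. x e * b e v) = 0)" for x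
  proof
    assume k: "(B_macro Q0 Q1 Boh x :: ('v \<Rightarrow> 'a) \<Rightarrow> 'a) \<in> ker_phi_hat Q0 Q1 Boh"
    then have z: "\<And>v. (\<Sum>e\<in>Q1. x e * b e v) - (\<Sum>e\<in>Q1. x e) * a v = 0"
      unfolding ker_phi_hat_def using phiB by (metis (mono_tags, lifting) mem_Collect_eq)
    have "(\<Sum>e\<in>Q1. x e * b e s) = 0" using bs by simp
    then have s0: "(\<Sum>e\<in>Q1. x e) = 0" using z[of s] as by simp
    then show "(\<Sum>e\<in>Q1. x e) = 0 \<and> (\<forall>v. (\<Sum>e\<in>Q1. x e * b e v) = 0)" using z by simp
  next
    assume "(\<Sum>e\<in>Q1. x e) = 0 \<and> (\<forall>v. (\<Sum>e\<in>Q1. x e * b e v) = 0)"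
    then show "(B_macro Q0 Q1 Boh x :: ('v \<Rightarrow> 'a) \<Rightarrow> 'a) \<in> ker_phi_hat Q0 Q1 Boh"
      unfolding ker_phi_hat_def using phiB B_outside by (auto simp: fun_eq_iff)
  qed
  define W where "W = (im_B_macro Q0 Q1 Boh \<inter> ker_phi_hat Q0 Q1 Boh :: (('v \<Rightarrow> 'a) \<Rightarrow> 'a) set)"
  have Bzero: "B_macro Q0 Q1 Boh x = (0 :: ('v \<Rightarrow> 'a) \<Rightarrow> 'a)" if "\<forall>e\<in>Q1. x e = 0" for x
    using that by (simp add: B_macro_def fun_eq_iff)
  have Bval: "(B_macro Q0 Q1 Boh x :: ('v \<Rightarrow> 'a) \<Rightarrow> 'a) (b e) = x e" if "e \<in> Q1" for x e
  proof -
    have "(B_macro Q0 Q1 Boh x :: ('v \<Rightarrow> 'a) \<Rightarrow> 'a) (b e)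
        = (\<Sum>f\<in>Q1. if f = e then x f else 0)"
      unfolding B_macro_def
    proof (rule sum.cong)
      fix f assume f: "f \<in> Q1"
      have "b e = b f \<longleftrightarrow> f = e" using binj f that by (auto dest: inj_onD)
      then show "x f * ((if b e = F_B Q0 Boh f then 1 else 0) - (if b e = F_A Q0 Boh f then 1 else 0))
          = (if f = e then x f else 0)"
        using FA[OF f] FB bna[OF that] by auto
    qed simp
    also have "\<dots> = x e" using that assms(2) by simp
    finally show ?thesis .
  qed
  have nonzero_iff: "(\<exists>y\<in>W. y \<noteq> 0) \<longleftrightarrow> affinely_dependent_family Q1 b"
  proof
    assume "\<exists>y\<in>W. y \<noteq> 0"
    then obtain x where y: "(B_macro Q0 Q1 Boh x :: ('v \<Rightarrow> 'a) \<Rightarrow> 'a) \<in> ker_phi_hat Q0 Q1 Boh"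
      "B_macro Q0 Q1 Boh x \<noteq> (0 :: ('v \<Rightarrow> 'a) \<Rightarrow> 'a)"
      unfolding W_def im_B_macro_def by blast
    have "\<exists>e\<in>Q1. x e \<noteq> 0" using y(2) Bzero by blast
    then show "affinely_dependent_family Q1 b"
      unfolding affinely_dependent_family_def using kerB y(1) by blast
  next
    assume "affinely_dependent_family Q1 b"
    then obtain c where c: "\<exists>i\<in>Q1. c i \<noteq> 0" "(\<Sum>i\<in>Q1. c i) = 0" "\<forall>v. (\<Sum>i\<in>Q1. c i * b i v) = 0"
      unfolding affinely_dependent_family_def by blast
    define x where "x = (\<lambda>e. if e \<in> Q1 then c e else 0)"
    have sx: "(\<Sum>i\<in>Q1. x i) = 0" "\<forall>v. (\<Sum>i\<in>Q1. x i * b i v) = 0"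
      using c by (simp_all add: x_def)
    have "(B_macro Q0 Q1 Boh x :: ('v \<Rightarrow> 'a) \<Rightarrow> 'a) \<in> W"
      unfolding W_def im_B_macro_def using kerB sx by (auto simp: x_def)
    moreover obtain i where "i \<in> Q1" "c i \<noteq> 0" using c by blast
    then have "(B_macro Q0 Q1 Boh x :: ('v \<Rightarrow> 'a) \<Rightarrow> 'a) \<noteq> 0"
      using Bval[of i x] by (metis x_def zero_fun_def)
    ultimately show "\<exists>y\<in>W. y \<noteq> 0" by blast
  qed
  interpret VS: vector_space "\<lambda>(c::'a) (f :: ('v \<Rightarrow> 'a) \<Rightarrow> 'a). \<lambda>w. c * f w"
    by unfold_locales (simp_all add: fun_eq_iff algebra_simps)
  have dW: "delta_F Q0 Q1 Boh TYPE('a) = VS.dim W"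
    by (simp add: delta_F_def W_def)
  define G where "G = (\<lambda>w. \<lambda>u. if u = w then (1::'a) else 0) ` ?V"
  have fV: "finite ?V" using finite_V[OF assms(2)] by blast
  have fG: "finite G" unfolding G_def by (rule finite_imageI[OF fV])
  have WG: "W \<subseteq> VS.span G"
  proof
    fix y assume yW: "y \<in> W"
    then have out: "\<And>w. w \<notin> ?V \<Longrightarrow> y w = 0" by (auto simp: W_def ker_phi_hat_def)
    have "y = (\<Sum>w\<in>?V. (\<lambda>u. y w * (if u = w then (1::'a) else 0)))"
    proof (rule ext)
      fix u
      have "(\<Sum>w\<in>?V. (\<lambda>u. y w * (if u = w then (1::'a) else 0))) u = (\<Sum>w\<in>?V. if u = w then y w else 0)"
        unfolding sum_fun_apply' by (rule sum.cong) auto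
      also have "\<dots> = y u" using fV out by (simp add: sum.delta)
      finally show "y u = (\<Sum>w\<in>?V. (\<lambda>u. y w * (if u = w then (1::'a) else 0))) u" by simp
    qed
    also have "\<dots> \<in> VS.span G"
      by (rule VS.span_sum, rule VS.span_scale[where c = "y _"], rule VS.span_base) (auto simp: G_def)
    finally show "y \<in> VS.span G" .
  qed
  have dim_pos: "VS.dim W > 0 \<longleftrightarrow> (\<exists>y\<in>W. y \<noteq> 0)"
  proof -
    obtain B where B: "B \<subseteq> W" "VS.independent B" "W \<subseteq> VS.span B" "card B = VS.dim W"
      using VS.basis_exists by blast
    have fB: "finite B" using VS.independent_span_bound[OF fG B(2)] B(1) WG by blast
    show ?thesis
    proof
      assume "VS.dim W > 0"
      then have "B \<noteq> {}" using B(4) by auto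
      then obtain y where "y \<in> B" by blast
      moreover have "y \<noteq> 0" using \<open>y \<in> B\<close> B(2) VS.dependent_zero by blast
      ultimately show "\<exists>y\<in>W. y \<noteq> 0" using B(1) by blast
    next
      assume "\<exists>y\<in>W. y \<noteq> 0"
      then obtain y where "y \<in> W" "y \<noteq> 0" by blast
      then have "B \<noteq> {}" using B(3) by auto
      then show "VS.dim W > 0" using B(4) fB by auto
    qed
  qed
  have part2: "delta_F Q0 Q1 Boh TYPE('a) > 0 \<longleftrightarrow> affinely_dependent_family Q1 b"
    using dW dim_pos nonzero_iff by simp
  have part3: "card Q1 \<ge> 4" if dep: "affinely_dependent_family Q1 b"
  proof (rule ccontr)
    assume "\<not> card Q1 \<ge> 4"
    then have cQQ: "card Q1 \<le> 3" by simp
    obtain c where c: "\<exists>i\<in>Q1. c i \<noteq> 0" "(\<Sum>i\<in>Q1. c i) = 0" "\<forall>v. (\<Sum>i\<in>Q1. c i * b i v) = 0"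
      using dep unfolding affinely_dependent_family_def by blast
    have Hinj: "H e \<noteq> H f" if "e \<in> Q1" "f \<in> Q1" "e \<noteq> f" for e f
      using assms(7) that unfolding H_def inj_on_def by blast
    have "card Q1 = 1 \<or> card Q1 = 2 \<or> card Q1 = 3"
      using cQQ assms(2,4) by (metis card_0_eq le_Suc_eq numeral_3_eq_3 numeral_2_eq_2 One_nat_def le_zero_eq)
    then show False
    proof (elim disjE)
      assume "card Q1 = 1"
      then obtain e where "Q1 = {e}" by (auto simp: card_1_singleton_iff)
      then show False using c by auto
    next
      assume "card Q1 = 2"
      then obtain e f where ef: "Q1 = {e, f}" "e \<noteq> f" by (auto simp: card_2_iff)
      then have cf: "c f = - c e" using c(2) by (simp add: eq_neg_iff_add_eq_0 add.commute)
      have ce: "c e \<noteq> 0" using c(1) ef cf by auto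
      have "H e \<noteq> H f" using Hinj ef by auto
      then obtain v where "(v \<in> H e) \<noteq> (v \<in> H f)" by blast
      moreover have "c e * b e v + c f * b f v = 0" using c(3) ef by auto
      ultimately show False using ce cf by (auto simp: b_def ind_vec_def split: if_splits)
    next
      assume "card Q1 = 3"
      then obtain e f g where efg: "Q1 = {e, f, g}" "e \<noteq> f" "e \<noteq> g" "f \<noteq> g" by (auto simp: card_3_iff)
      show False
      proof (rule three_case[of "c e" "c f" "c g" "H e" "H f" "H g"])
        show "c e \<noteq> 0 \<or> c f \<noteq> 0 \<or> c g \<noteq> 0" using c(1) efg by auto
        show "c e + c f + c g = 0" using c(2) efg by (simp add: add.assoc)
        show "\<forall>v. c e * ind_vec (H e) v + c f * ind_vec (H f) v + c g * ind_vec (H g) v = 0"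
          using c(3) efg by (simp add: b_def add.assoc)
        show "H e \<noteq> H f" "H e \<noteq> H g" "H f \<noteq> H g" using Hinj efg by auto
      qed
    qed
  qed
  have bdef: "(\<lambda>e. (ind_vec (oh_tgt Q0 Boh e) :: 'v \<Rightarrow> 'a)) = b" by (simp add: b_def H_def)
  show ?thesis using star part2 part3 unfolding bdef by blast
qed

end
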